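(* Let $N$ be an odd natural number and let $b_1,\dots,b_N$ be integers such that $b_1,b_3,b_5,\dots,b_N$ (the entries with odd index) are all even. Suppose $p,q$ are relatively prime integers with $q\neq 0$ and $p/q=[b_1,b_2,\dots,b_N]$, where $$[b_1,b_2,\dots,b_N]=b_1-\cfrac{1}{b_2-\cfrac{1}{b_3-\cdots-\cfrac{1}{b_N}}}$$ (all intermediate denominators being nonzero). Then $$p\equiv(-1)^{\frac{N-1}{2}}(b_1+b_3+\cdots+b_N)\pmod 4.$$ *)

theory Defs
  imports "HOL-Number_Theory.Number_Theory"
begin

text \<open>Negative (minus) continued fraction [b1,...,bN] = b1 - 1/(b2 - 1/(... - 1/bN)).
  The list [b1,...,bN] is represented 0-based.\<close>
fun ncf :: "int list \<Rightarrow> rat" where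
  "ncf [] = 0"
| "ncf [b] = of_int b"
| "ncf (b # c # cs) = of_int b - 1 / ncf (c # cs)"

end

theory Submission
  imports Defs
begin

fun pq :: "int list \<Rightarrow> int \<times> int" where
  "pq [] = (0,1)"
| "pq [b] = (b,1)"
| "pq (b # c # cs) = (fst (pq (c # cs)) * b - snd (pq (c # cs)), fst (pq (c # cs)))"

fun esum :: "int list \<Rightarrow> int" where
  "esum [] = 0"
| "esum [b] = b"
| "esum (b # c # cs) = b + esum cs"

lemma esum_eq: "(\<Sum>i\<in>{i. i < length xs \<and> even i}. xs ! i) = esum xs"
proof (induction xs rule: esum.induct)
  case 1 then show ?case by simp
next
  case (2 b)
  have "{i. i < length [b] \<and> even i} = {0}" by auto
  then show ?case by simp
next
  case (3 b c cs)
  have S: "{i. i < length (b#c#cs) \<and> even i} = insert 0 ((\<lambda>i. i+2) ` {i. i < length cs \<and> even i})"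
    (is "?L = ?R")
  proof
    show "?L \<subseteq> ?R"
    proof
      fix i assume "i \<in> ?L"
      then show "i \<in> ?R"
      proof (cases "i = 0")
        case False
        with \<open>i \<in> ?L\<close> have "i \<ge> 2" by (cases i) (auto dest: odd_pos)
        with \<open>i \<in> ?L\<close> have "i - 2 \<in> {i. i < length cs \<and> even i}" "i = (i-2)+2"
          by auto
        then show ?thesis by blast
      qed simp
    qed
  qed auto
  have "(\<Sum>i\<in>?R. (b#c#cs) ! i) = b + (\<Sum>i\<in>{i. i < length cs \<and> even i}. cs ! i)"
    by (subst sum.insert) (auto simp: sum.reindex inj_on_def)
  then show ?case using S 3 by simp
qed

lemma inv:
  assumes "odd (length xs)" "\<forall>i < length xs. even i \<longrightarrow> even (xs ! i)"
  shows "4 dvd (fst (pq xs) - (-1) ^ ((length xs - 1) div 2) * esum xs)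
         \<and> odd (snd (pq xs)) \<and> even (fst (pq xs)) \<and> even (esum xs)"
  using assms
proof (induction xs rule: esum.induct)
  case 1 then show ?case by simp
next
  case (2 b) then show ?case by auto
next
  case (3 a c cs)
  have ea: "even a" using "3.prems"(2) by auto
  have ocs: "odd (length cs)" using "3.prems"(1) by simp
  then obtain m where lm: "length cs = Suc (2*m)" by (metis oddE odd_pos Suc_pred' One_nat_def add.commute plus_1_eq_Suc)
  have "\<forall>i < length cs. even i \<longrightarrow> even (cs ! i)"
  proof (intro allI impI)
    fix i assume "i < length cs" "even i"
    then have "Suc (Suc i) < length (a#c#cs)" "even (Suc (Suc i))" by auto
    then show "even (cs ! i)" using "3.prems"(2) by fastforce
  qed
  then have IH: "4 dvd (fst (pq cs) - (-1) ^ m * esum cs)" "odd (snd (pq cs))" "even (fst (pq cs))" "even (esum cs)"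
    using "3.IH" ocs lm by auto
  have len: "(length (a#c#cs) - 1) div 2 = Suc m" using lm by simp
  obtain P Q where PQ: "pq cs = (P,Q)" by fastforce
  have pc: "pq (c#cs) = (P*c - Q, P)"
    using lm PQ by (cases cs rule: pq.cases) auto
  define s :: int where "s = (-1)^m"
  have s: "s = 1 \<or> s = -1" unfolding s_def by (simp add: minus_one_power_iff)
  from IH PQ have h: "4 dvd (P - s * esum cs)" "odd Q" "even P" "even (esum cs)" by (auto simp: s_def)
  obtain a' where a': "a = 2*a'" using ea by blast
  obtain P' where P': "P = 2*P'" using h(3) by blast
  obtain Q' where Q': "Q = 2*Q'+1" using h(2) by (metis oddE)
  have e1: "(P*c - Q)*a - P - (-s) * (a + esum cs) = 4 * (a' * (P'*c - Q' + (s - 1) div 2)) - (P - s*esum cs)"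
    using s by (auto simp: a' P' Q' algebra_simps)
  have "4 dvd ((P*c - Q)*a - P - (-s) * (a + esum cs))"
    unfolding e1 using h(1) by simp
  moreover have "(-1::int) ^ Suc m = -s" by (simp add: s_def)
  ultimately show ?case using pc len h ea by (simp add: a' P' Q')
qed

lemma ncf_pq:
  assumes "xs \<noteq> []" "\<forall>k \<in> {1..<length xs}. ncf (drop k xs) \<noteq> 0"
  shows "ncf xs = of_int (fst (pq xs)) / of_int (snd (pq xs)) \<and> snd (pq xs) \<noteq> 0
         \<and> coprime (fst (pq xs)) (snd (pq xs))"
  using assms
proof (induction xs rule: pq.induct)
  case 1 then show ?case by simp
next
  case (2 b) then show ?case by simp
next
  case (3 b c cs)
  have "\<forall>k \<in> {1..<length (c#cs)}. ncf (drop k (c#cs)) \<noteq> 0"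
  proof
    fix k assume "k \<in> {1..<length (c#cs)}"
    then have "Suc k \<in> {1..<length (b#c#cs)}" by auto
    then show "ncf (drop k (c#cs)) \<noteq> 0" using "3.prems"(2) by fastforce
  qed
  then have IH: "ncf (c#cs) = of_int (fst (pq (c#cs))) / of_int (snd (pq (c#cs)))"
     "snd (pq (c#cs)) \<noteq> 0" "coprime (fst (pq (c#cs))) (snd (pq (c#cs)))"
    using "3.IH" by auto
  obtain P Q where PQ: "pq (c#cs) = (P,Q)" by fastforce
  have "(1::nat) \<in> {1..<length (b#c#cs)}" by simp
  with "3.prems"(2) have "ncf (drop 1 (b#c#cs)) \<noteq> 0" by blast
  then have nz: "ncf (c#cs) \<noteq> 0" by simp
  with IH PQ have P0: "P \<noteq> 0" by auto
  have "ncf (b#c#cs) = of_int b - of_int Q / of_int P" using IH PQ by simp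
  also have "\<dots> = of_int (P*b - Q) / of_int P" using P0 by (simp add: field_simps)
  finally have v: "ncf (b#c#cs) = of_int (P*b - Q) / of_int P" .
  have "coprime P Q" using IH PQ by simp
  then have cop: "coprime (P*b - Q) P"
    by (smt (verit, ccfv_SIG) coprime_imp_coprime dvd_add_right_iff dvd_mult2)
  show ?case using v P0 cop PQ by simp
qed

theorem lemma7:
  fixes bs :: "int list" and p q :: int
  assumes "odd (length bs)"
    and "\<forall>i < length bs. even i \<longrightarrow> even (bs ! i)"
    and "\<forall>k \<in> {1..<length bs}. ncf (drop k bs) \<noteq> 0"
    and "coprime p q" and "q \<noteq> 0"
    and "of_int p / of_int q = ncf bs"
  shows "[p = (-1) ^ ((length bs - 1) div 2) * (\<Sum>i\<in>{i. i < length bs \<and> even i}. bs ! i)] (mod 4)"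
proof -
  obtain P Q where PQ: "pq bs = (P,Q)" by fastforce
  have ne: "bs \<noteq> []" using assms(1) by auto
  from ncf_pq[OF ne assms(3)] PQ have v: "ncf bs = of_int P / of_int Q" "Q \<noteq> 0" "coprime P Q" by auto
  define s :: int where "s = (-1) ^ ((length bs - 1) div 2)"
  from inv[OF assms(1,2)] PQ have h: "4 dvd (P - s * esum bs)" "even P" "even (esum bs)"
    by (auto simp: s_def)
  have "(of_int p / of_int q :: rat) = of_int P / of_int Q" using assms(6) v by simp
  then have "of_int (p * Q) = (of_int (P * q) :: rat)" using v(2) assms(5) by (simp add: field_simps)
  then have eq: "p * Q = P * q" by (simp only: of_int_eq_iff)
  have "p dvd P * q" unfolding eq[symmetric] by simp
  then have d1: "p dvd P" using assms(4) by (simp add: coprime_dvd_mult_left_iff)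
  have "P dvd p * Q" unfolding eq by simp
  then have d2: "P dvd p" using v(3) by (simp add: coprime_dvd_mult_left_iff)
  have "\<bar>p\<bar> = \<bar>P\<bar>" by (rule zdvd_antisym_abs[OF d1 d2])
  then have pP: "p = P \<or> p = -P" by (simp add: abs_eq_iff)
  have s: "s = 1 \<or> s = -1" unfolding s_def by (simp add: minus_one_power_iff)
  have "4 dvd (p - s * esum bs)"
    using pP
  proof (elim disjE)
    assume "p = P"
    from h(1) show ?thesis unfolding \<open>p = P\<close> .
  next
    assume "p = -P"
    obtain E where E: "esum bs = 2*E" using h(3) by blast
    have eqn: "p - s * esum bs = -(P - s * esum bs) - 4 * (s * E)"
      unfolding \<open>p = -P\<close> E by (simp add: algebra_simps)
    have "4 dvd -(P - s * esum bs)" using h(1) by (simp only: dvd_minus_iff)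
    then have "4 dvd (-(P - s * esum bs) - 4 * (s * E))"
      by (rule dvd_diff) simp
    then show ?thesis by (simp only: eqn)
  qed
  then have "4 dvd (p - (-1) ^ ((length bs - 1) div 2) * esum bs)" unfolding s_def .
  then show ?thesis unfolding cong_iff_dvd_diff esum_eq .
qed

end
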